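(* Let $(z,x)$ be a feasible solution of the cluster LP on a finite vertex set $V$. For $u,v,w\in V$ define $y_{uv}=\sum_{S\supseteq\{u,v\}}z_S$ and $y_{uvw}=\sum_{S\supseteq\{u,v,w\}}z_S$. Then for any three distinct vertices $u,v,w$, $$3y_{uvw}\le y_{uv}+y_{uw}+y_{vw}\le\tfrac32+\tfrac32 y_{uvw}.$$
   Context: The cluster LP for a finite vertex set $V$ has a variable $z_S$ for every nonempty $S\subseteq V$ and $x_{uv}$ for every unordered pair $uv$ of distinct vertices, with constraints $\sum_{S\ni u}z_S=1$ for all $u\in V$, $\sum_{S\supseteq\{u,v\}}z_S=1-x_{uv}$ for all $uv$, and $z_S\ge0$. *)

theory Defs
  imports Main Complex_Main
begin

definition cluster_LP_feasible :: "'a set \<Rightarrow> ('a set \<Rightarrow> real) \<Rightarrow> ('a set \<Rightarrow> real) \<Rightarrow> bool" where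
  "cluster_LP_feasible V z x \<longleftrightarrow>
     finite V \<and>
     (\<forall>S. S \<subseteq> V \<and> S \<noteq> {} \<longrightarrow> z S \<ge> 0) \<and>
     (\<forall>u\<in>V. (\<Sum>S\<in>{S. S \<subseteq> V \<and> S \<noteq> {} \<and> u \<in> S}. z S) = 1) \<and>
     (\<forall>u\<in>V. \<forall>v\<in>V. u \<noteq> v \<longrightarrow>
        (\<Sum>S\<in>{S. S \<subseteq> V \<and> {u, v} \<subseteq> S}. z S) = 1 - x {u, v})"

definition y_of :: "'a set \<Rightarrow> ('a set \<Rightarrow> real) \<Rightarrow> 'a set \<Rightarrow> real" where
  "y_of V z T = (\<Sum>S\<in>{S. S \<subseteq> V \<and> T \<subseteq> S}. z S)"

end

theory Submission
  imports Defs
begin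

lemma y_of_alt:
  assumes "finite V"
  shows "y_of V z T = (\<Sum>S\<in>Pow V. if T \<subseteq> S then z S else 0)"
proof -
  have "{S. S \<subseteq> V \<and> T \<subseteq> S} = {S\<in>Pow V. T \<subseteq> S}" by auto
  then show ?thesis unfolding y_of_def using sum.inter_filter[of "Pow V" z "\<lambda>S. T \<subseteq> S"] assms by simp
qed

lemma vert_alt:
  assumes "finite V"
  shows "(\<Sum>S\<in>{S. S \<subseteq> V \<and> S \<noteq> {} \<and> u \<in> S}. z S) = (\<Sum>S\<in>Pow V. if {u} \<subseteq> S then z S else 0)"
proof -
  have "{S. S \<subseteq> V \<and> S \<noteq> {} \<and> u \<in> S} = {S\<in>Pow V. {u} \<subseteq> S}" by auto
  then show ?thesis using sum.inter_filter[of "Pow V" z "\<lambda>S. {u} \<subseteq> S"] assms by simp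
qed

theorem lemma17:
  fixes V :: "'a set" and z x :: "'a set \<Rightarrow> real" and u v w :: 'a
  assumes "cluster_LP_feasible V z x"
    and "u \<in> V" "v \<in> V" "w \<in> V"
    and "u \<noteq> v" "u \<noteq> w" "v \<noteq> w"
  shows "3 * y_of V z {u, v, w} \<le> y_of V z {u, v} + y_of V z {u, w} + y_of V z {v, w}
    \<and> y_of V z {u, v} + y_of V z {u, w} + y_of V z {v, w} \<le> 3/2 + 3/2 * y_of V z {u, v, w}"
proof -
  have fin: "finite V" and nn: "\<And>S. S \<subseteq> V \<Longrightarrow> S \<noteq> {} \<Longrightarrow> z S \<ge> 0"
    and one: "\<And>a. a \<in> V \<Longrightarrow> (\<Sum>S\<in>Pow V. if {a} \<subseteq> S then z S else 0) = 1"
    using assms(1) unfolding cluster_LP_feasible_def apply auto[2]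
    using assms(1) vert_alt[of V z] unfolding cluster_LP_feasible_def by (metis (no_types))
  define I where "I T S = (if T \<subseteq> S then z S else (0::real))" for T S
  have Y: "\<And>T. y_of V z T = sum (I T) (Pow V)" using y_of_alt[OF fin] unfolding I_def by simp
  have O: "\<And>a. a \<in> V \<Longrightarrow> sum (I {a}) (Pow V) = 1" using one unfolding I_def by simp
  have p1: "\<And>S. S \<in> Pow V \<Longrightarrow> 3 * I {u,v,w} S \<le> I {u,v} S + I {u,w} S + I {v,w} S"
  proof -
    fix S assume "S \<in> Pow V"
    show "3 * I {u,v,w} S \<le> I {u,v} S + I {u,w} S + I {v,w} S"
    proof (cases "S = {}")
      case True then show ?thesis unfolding I_def by simp
    next
      case False
      then have "z S \<ge> 0" using nn \<open>S \<in> Pow V\<close> by auto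
      then show ?thesis unfolding I_def by auto
    qed
  qed
  have p2: "\<And>S. S \<in> Pow V \<Longrightarrow> I {u,v} S + I {u,w} S + I {v,w} S
     \<le> 1/2 * (I {u} S + I {v} S + I {w} S) + 3/2 * I {u,v,w} S"
  proof -
    fix S assume "S \<in> Pow V"
    show "I {u,v} S + I {u,w} S + I {v,w} S
     \<le> 1/2 * (I {u} S + I {v} S + I {w} S) + 3/2 * I {u,v,w} S"
    proof (cases "S = {}")
      case True then show ?thesis unfolding I_def by simp
    next
      case False
      then have "z S \<ge> 0" using nn \<open>S \<in> Pow V\<close> by auto
      then show ?thesis unfolding I_def by auto
    qed
  qed
  have A: "sum (\<lambda>S. 3 * I {u,v,w} S) (Pow V) \<le> sum (\<lambda>S. I {u,v} S + I {u,w} S + I {v,w} S) (Pow V)"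
    using p1 by (rule sum_mono)
  have B: "sum (\<lambda>S. I {u,v} S + I {u,w} S + I {v,w} S) (Pow V)
     \<le> sum (\<lambda>S. 1/2 * (I {u} S + I {v} S + I {w} S) + 3/2 * I {u,v,w} S) (Pow V)"
    using p2 by (rule sum_mono)
  have C: "sum (\<lambda>S. 1/2 * (I {u} S + I {v} S + I {w} S) + 3/2 * I {u,v,w} S) (Pow V)
     = 1/2 * (sum (I {u}) (Pow V) + sum (I {v}) (Pow V) + sum (I {w}) (Pow V)) + 3/2 * sum (I {u,v,w}) (Pow V)"
    by (simp only: sum.distrib sum_distrib_left[symmetric])
  show ?thesis
    using A B C O[OF assms(2)] O[OF assms(3)] O[OF assms(4)]
    unfolding Y by (simp add: sum.distrib sum_distrib_left[symmetric])
qed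

end
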